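(* For any constant $\epsilon>0$, any randomized online algorithm for online bipartite matching in the random edge arrival model that does not know the number of edges to arrive has competitive ratio at most $\frac23+\epsilon$.
   Context: Online bipartite matching in the random edge arrival model: the edges of a fixed bipartite graph arrive one at a time in a uniformly random order; upon each arrival the algorithm irrevocably decides whether to add the edge to its matching, which must remain a matching. Here the algorithm is not told the total number of edges. The competitive ratio is the infimum over graphs of (expected size of the output matching over the order and the algorithm's coins)$/|\textsc{OPT}|$, with $\textsc{OPT}$ a maximum matching. *)

theory Defs
  imports "HOL-Probability.Probability" "HOL-Combinatorics.Multiset_Permutations"
begin

text \<open>Bipartite graphs: an edge (u,v) joins left vertex u to right vertex v;
  a graph is a finite set of such edges.\<close>
type_synonym edge = "nat \<times> nat"

definition is_matching :: "edge set \<Rightarrow> bool" where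
  "is_matching M \<longleftrightarrow> (\<forall>e\<in>M. \<forall>f\<in>M. e \<noteq> f \<longrightarrow> fst e \<noteq> fst f \<and> snd e \<noteq> snd f)"

definition opt :: "edge set \<Rightarrow> nat" where
  "opt E = Max {card M | M. M \<subseteq> E \<and> is_matching M}"

text \<open>A randomized online algorithm (behavioural form): given the history of arrived
  edges together with its own past decisions, and the newly arrived edge, it outputs
  the probability of accepting the new edge. It is not told the number of edges.\<close>
type_synonym online_alg = "(edge \<times> bool) list \<Rightarrow> edge \<Rightarrow> real"

definition accepted :: "(edge \<times> bool) list \<Rightarrow> edge set" where
  "accepted h = {e. (e, True) \<in> set h}"

definition can_add :: "(edge \<times> bool) list \<Rightarrow> edge \<Rightarrow> bool" where
  "can_add h e \<longleftrightarrow> (\<forall>f\<in>accepted h. fst f \<noteq> fst e \<and> snd f \<noteq> snd e)"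

fun run :: "online_alg \<Rightarrow> (edge \<times> bool) list \<Rightarrow> edge list \<Rightarrow> (edge \<times> bool) list pmf" where
  "run A h [] = return_pmf h"
| "run A h (e # es) =
     (if can_add h e
      then bind_pmf (bernoulli_pmf (A h e)) (\<lambda>b. run A (h @ [(e, b)]) es)
      else run A (h @ [(e, False)]) es)"

definition expected_alg :: "online_alg \<Rightarrow> edge set \<Rightarrow> real" where
  "expected_alg A E =
     measure_pmf.expectation
       (bind_pmf (pmf_of_set (permutations_of_set E)) (\<lambda>xs. run A [] xs))
       (\<lambda>h. real (card (accepted h)))"

definition competitive_ratio :: "online_alg \<Rightarrow> real" where
  "competitive_ratio A =
     (INF E \<in> {E. finite E \<and> E \<noteq> {}}. expected_alg A E / real (opt E))"

end

theory Submission
  imports Defs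
begin

lemma finite_run: "finite (set_pmf (run A h xs))"
  by (induction xs arbitrary: h) auto

lemma run_append: "run A h (xs @ ys) = bind_pmf (run A h xs) (\<lambda>h'. run A h' ys)"
  by (induction xs arbitrary: h) (auto simp: bind_return_pmf bind_assoc_pmf)

lemma run_support: "h' \<in> set_pmf (run A h xs) \<Longrightarrow> \<exists>zs. h' = h @ zs \<and> map fst zs = xs"
proof (induction xs arbitrary: h)
  case Nil then show ?case by simp
next
  case (Cons e xs)
  show ?case
  proof (cases "can_add h e")
    case True
    with Cons.prems obtain b where "h' \<in> set_pmf (run A (h @ [(e,b)]) xs)" by auto
    from Cons.IH[OF this] obtain zs where "h' = (h @ [(e,b)]) @ zs" "map fst zs = xs" by blast
    then show ?thesis by (intro exI[of _ "(e,b) # zs"]) auto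
  next
    case False
    with Cons.prems have "h' \<in> set_pmf (run A (h @ [(e,False)]) xs)" by auto
    from Cons.IH[OF this] obtain zs where "h' = (h @ [(e,False)]) @ zs" "map fst zs = xs" by blast
    then show ?thesis by (intro exI[of _ "(e,False) # zs"]) auto
  qed
qed

lemma accepted_append: "accepted (h @ zs) = accepted h \<union> accepted zs"
  by (auto simp: accepted_def)

lemma accepted_sub: "accepted zs \<subseteq> set (map fst zs)"
  by (force simp: accepted_def)

lemma finite_accepted: "finite (accepted h)"
proof -
  have "accepted h \<subseteq> fst ` set h" by (force simp: accepted_def)
  then show ?thesis by (rule finite_subset) auto
qed

lemma run_matching: "is_matching (accepted h) \<Longrightarrow> h' \<in> set_pmf (run A h xs) \<Longrightarrow> is_matching (accepted h')"
proof (induction xs arbitrary: h)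
  case Nil then show ?case by simp
next
  case (Cons e xs)
  show ?case
  proof (cases "can_add h e")
    case True
    with Cons.prems obtain b where b: "h' \<in> set_pmf (run A (h @ [(e,b)]) xs)" by auto
    have "is_matching (accepted (h @ [(e,b)]))"
    proof (cases b)
      case True
      have "accepted (h @ [(e,b)]) = insert e (accepted h)" using True by (auto simp: accepted_def)
      moreover have "\<forall>f\<in>accepted h. fst f \<noteq> fst e \<and> snd f \<noteq> snd e" using \<open>can_add h e\<close> by (simp add: can_add_def)
      ultimately show ?thesis using Cons.prems(1) unfolding is_matching_def by auto
    next
      case False
      then have "accepted (h @ [(e,b)]) = accepted h" by (auto simp: accepted_def)
      then show ?thesis using Cons.prems(1) by simp
    qed
    from Cons.IH[OF this b] show ?thesis .
  next
    case False
    with Cons.prems have b: "h' \<in> set_pmf (run A (h @ [(e,False)]) xs)" by auto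
    have "accepted (h @ [(e,False)]) = accepted h" by (auto simp: accepted_def)
    then have "is_matching (accepted (h @ [(e,False)]))" using Cons.prems(1) by simp
    from Cons.IH[OF this b] show ?thesis .
  qed
qed

lemma E_sum: "finite (set_pmf M) \<Longrightarrow>
  measure_pmf.expectation M (f::_\<Rightarrow>real) = (\<Sum>a\<in>set_pmf M. f a * pmf M a)"
  by (rule integral_measure_pmf_real) auto

lemma E_bind:
  assumes fin: "finite (set_pmf M)" and finN: "\<And>x. x \<in> set_pmf M \<Longrightarrow> finite (set_pmf (N x))"
  shows "measure_pmf.expectation (bind_pmf M N) (f::_\<Rightarrow>real) =
         measure_pmf.expectation M (\<lambda>x. measure_pmf.expectation (N x) f)"
proof -
  define Y where "Y = set_pmf (bind_pmf M N)"
  have finY: "finite Y" unfolding Y_def set_bind_pmf using fin finN by (intro finite_UN_I)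
  have sub: "x \<in> set_pmf M \<Longrightarrow> set_pmf (N x) \<subseteq> Y" for x by (auto simp: Y_def)
  have "measure_pmf.expectation (bind_pmf M N) f = (\<Sum>y\<in>Y. f y * pmf (bind_pmf M N) y)"
    by (rule integral_measure_pmf_real[OF finY]) (auto simp: Y_def)
  also have "\<dots> = (\<Sum>y\<in>Y. \<Sum>x\<in>set_pmf M. f y * (pmf (N x) y * pmf M x))"
    unfolding pmf_bind
    by (subst integral_measure_pmf_real[OF fin]) (auto simp: sum_distrib_left)
  also have "\<dots> = (\<Sum>x\<in>set_pmf M. (\<Sum>y\<in>Y. f y * pmf (N x) y) * pmf M x)"
    by (subst sum.swap) (simp add: sum_distrib_right mult.assoc)
  also have "\<dots> = (\<Sum>x\<in>set_pmf M. measure_pmf.expectation (N x) f * pmf M x)"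
    by (intro sum.cong refl, subst integral_measure_pmf_real[OF finY]) (auto dest: sub)
  also have "\<dots> = measure_pmf.expectation M (\<lambda>x. measure_pmf.expectation (N x) f)"
    by (rule E_sum[symmetric, OF fin])
  finally show ?thesis .
qed

lemma E_mono:
  assumes "finite (set_pmf M)" "\<And>x. x \<in> set_pmf M \<Longrightarrow> (f::_\<Rightarrow>real) x \<le> g x"
  shows "measure_pmf.expectation M f \<le> measure_pmf.expectation M g"
  using assms by (simp add: E_sum sum_mono mult_right_mono)

definition W :: "real \<Rightarrow> 'a set \<Rightarrow> ('a set \<Rightarrow> real) \<Rightarrow> real" where
  "W p A f = (\<Sum>S\<in>Pow A. p ^ card S * (1-p) ^ card (A - S) * f S)"

lemma W_union:
  assumes "finite A" "finite B" "A \<inter> B = {}"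
  shows "W p (A \<union> B) f = W p A (\<lambda>X. W p B (\<lambda>Y. f (X \<union> Y)))"
proof -
  have img: "Pow (A \<union> B) = (\<lambda>(X,Y). X \<union> Y) ` (Pow A \<times> Pow B)"
  proof
    show "Pow (A \<union> B) \<subseteq> (\<lambda>(X,Y). X \<union> Y) ` (Pow A \<times> Pow B)"
    proof
      fix S assume "S \<in> Pow (A \<union> B)"
      then have "S = (S \<inter> A) \<union> (S \<inter> B)" "(S \<inter> A, S \<inter> B) \<in> Pow A \<times> Pow B" by auto
      then show "S \<in> (\<lambda>(X,Y). X \<union> Y) ` (Pow A \<times> Pow B)" by (metis (no_types, lifting) case_prod_conv image_eqI)
    qed
  qed auto
  have inj: "inj_on (\<lambda>(X,Y). X \<union> Y) (Pow A \<times> Pow B)"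
  proof (rule inj_onI, clarify)
    fix X Y X' Y' assume "X \<subseteq> A" "Y \<subseteq> B" "X' \<subseteq> A" "Y' \<subseteq> B" "X \<union> Y = X' \<union> Y'"
    then have "X = (X \<union> Y) \<inter> A" "X' = (X' \<union> Y') \<inter> A" "Y = (X \<union> Y) \<inter> B" "Y' = (X' \<union> Y') \<inter> B"
      using assms(3) by auto
    then show "X = X' \<and> Y = Y'" using \<open>X \<union> Y = X' \<union> Y'\<close> by metis
  qed
  have tm: "p ^ card (X \<union> Y) * (1-p) ^ card (A \<union> B - (X \<union> Y)) * f (X \<union> Y)
      = (p ^ card X * (1-p) ^ card (A - X)) * (p ^ card Y * (1-p) ^ card (B - Y) * f (X \<union> Y))"
    if "X \<subseteq> A" "Y \<subseteq> B" for X Y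
  proof -
    have fx: "finite X" "finite Y" using that assms by (auto intro: finite_subset)
    have "card (X \<union> Y) = card X + card Y"
      using that assms fx by (intro card_Un_disjoint) auto
    moreover have "A \<union> B - (X \<union> Y) = (A - X) \<union> (B - Y)" using that assms by auto
    moreover have "card ((A - X) \<union> (B - Y)) = card (A - X) + card (B - Y)"
      using assms by (intro card_Un_disjoint) auto
    ultimately show ?thesis by (simp add: power_add algebra_simps)
  qed
  have "W p (A \<union> B) f = (\<Sum>(X,Y)\<in>Pow A \<times> Pow B. p ^ card (X \<union> Y) * (1-p) ^ card (A \<union> B - (X \<union> Y)) * f (X \<union> Y))"
    unfolding W_def img by (subst sum.reindex[OF inj]) (simp add: case_prod_unfold)
  also have "\<dots> = (\<Sum>(X,Y)\<in>Pow A \<times> Pow B. (p ^ card X * (1-p) ^ card (A - X)) * (p ^ card Y * (1-p) ^ card (B - Y) * f (X \<union> Y)))"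
    by (intro sum.cong refl) (auto simp: tm)
  also have "\<dots> = W p A (\<lambda>X. W p B (\<lambda>Y. f (X \<union> Y)))"
    unfolding W_def by (simp add: sum.cartesian_product[symmetric] sum_distrib_left)
  finally show ?thesis .
qed

lemma W_empty[simp]: "W p {} f = f {}"
  by (simp add: W_def)

lemma W_single: "W p {a} f = (1-p) * f {} + p * f {a}"
proof -
  have "Pow {a} = {{}, {a}}" by auto
  then show ?thesis by (simp add: W_def)
qed

lemma W_const: "finite A \<Longrightarrow> W p A (\<lambda>_. c) = c"
proof (induction A rule: finite_induct)
  case empty then show ?case by simp
next
  case (insert a A)
  have "W p (insert a A) (\<lambda>_. c) = W p ({a} \<union> A) (\<lambda>_. c)" by simp
  also have "\<dots> = W p {a} (\<lambda>X. W p A (\<lambda>Y. c))" using insert by (intro W_union) auto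
  also have "\<dots> = c" using insert by (simp add: W_single algebra_simps)
  finally show ?case .
qed

lemma W_mono:
  assumes "0 \<le> p" "p \<le> 1" "\<And>S. S \<subseteq> A \<Longrightarrow> f S \<le> g S"
  shows "W p A f \<le> W p A g"
  unfolding W_def using assms by (intro sum_mono mult_left_mono) auto

lemma W_add: "W p A (\<lambda>S. f S + g S) = W p A f + W p A g"
  by (simp add: W_def algebra_simps sum.distrib)

lemma W_diff: "W p A (\<lambda>S. f S - g S) = W p A f - W p A g"
  by (simp add: W_def algebra_simps sum_subtractf)

lemma W_cmult: "W p A (\<lambda>S. c * f S) = c * W p A f"
  by (simp add: W_def algebra_simps sum_distrib_left)

lemma W_sum: "W p A (\<lambda>S. \<Sum>i\<in>I. f i S) = (\<Sum>i\<in>I. W p A (f i))"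
  by (simp add: W_def sum_distrib_left sum.swap[of _ I])

lemma W_restrict:
  assumes "finite A" "B \<subseteq> A"
  shows "W p A (\<lambda>S. f (S \<inter> B)) = W p B f"
proof -
  have fB: "finite B" using assms finite_subset by auto
  have "A = B \<union> (A - B)" using assms by auto
  then have "W p A (\<lambda>S. f (S \<inter> B)) = W p (B \<union> (A - B)) (\<lambda>S. f (S \<inter> B))" by simp
  also have "\<dots> = W p B (\<lambda>X. W p (A - B) (\<lambda>Y. f ((X \<union> Y) \<inter> B)))"
    using assms fB by (intro W_union) auto
  also have "\<dots> = W p B (\<lambda>X. W p (A - B) (\<lambda>Y. f X))"
    unfolding W_def
  proof (intro sum.cong refl arg_cong2[where f="(*)"] arg_cong[where f=f])
    fix X Y assume "X \<in> Pow B" "Y \<in> Pow (A - B)"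
    then show "(X \<union> Y) \<inter> B = X" by auto
  qed
  also have "\<dots> = W p B f" using assms by (simp add: W_const)
  finally show ?thesis .
qed

lemma W_mem:
  assumes "finite A" "e \<in> A"
  shows "W p A (\<lambda>S. if e \<in> S then 1 else 0) = p"
proof -
  have "W p A (\<lambda>S. if e \<in> S then 1 else 0) = W p A (\<lambda>S. (\<lambda>T. if e \<in> T then 1 else 0) (S \<inter> {e}))"
    by (intro arg_cong[where f="W p A"]) auto
  also have "\<dots> = W p {e} (\<lambda>T. if e \<in> T then 1 else 0)"
    using assms by (intro W_restrict) auto
  also have "\<dots> = p" by (simp add: W_single)
  finally show ?thesis .
qed

lemma W_emptyind:
  assumes "finite A"
  shows "W p A (\<lambda>S. if S = {} then 1 else 0) = (1-p) ^ card A"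
proof -
  have "W p A (\<lambda>S. if S = {} then 1 else 0) = (\<Sum>S\<in>Pow A. if S = {} then (1-p) ^ card A else 0)"
    unfolding W_def by (intro sum.cong refl) auto
  also have "\<dots> = (1-p) ^ card A" using assms by (simp add: sum.delta)
  finally show ?thesis .
qed

lemma W_bycard:
  assumes "finite A"
  shows "W p A f = (\<Sum>m\<le>card A. p ^ m * (1-p) ^ (card A - m) * (\<Sum>S\<in>{S. S \<subseteq> A \<and> card S = m}. f S))"
proof -
  have "Pow A = (\<Union>m\<in>{..card A}. {S. S \<subseteq> A \<and> card S = m})"
    using assms by (auto intro: card_mono)
  then have "W p A f = (\<Sum>m\<le>card A. \<Sum>S\<in>{S. S \<subseteq> A \<and> card S = m}. p ^ card S * (1-p) ^ card (A - S) * f S)"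
    unfolding W_def using assms
    by (simp, subst sum.UNION_disjoint) auto
  also have "\<dots> = (\<Sum>m\<le>card A. p ^ m * (1-p) ^ (card A - m) * (\<Sum>S\<in>{S. S \<subseteq> A \<and> card S = m}. f S))"
    unfolding sum_distrib_left
    by (intro sum.cong refl) (auto simp: card_Diff_subset finite_subset[OF _ assms])
  finally show ?thesis .
qed

lemma opt_set_finite: "finite S \<Longrightarrow> finite {card M | M. M \<subseteq> S \<and> is_matching M}"
proof -
  assume "finite S"
  have "{card M | M. M \<subseteq> S \<and> is_matching M} \<subseteq> card ` Pow S" by auto
  then show ?thesis using \<open>finite S\<close> by (meson finite_Pow_iff finite_imageI finite_subset)
qed

lemma opt_set_ne: "{card M | M. M \<subseteq> S \<and> is_matching M} \<noteq> {}"
proof -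
  have "is_matching {}" by (simp add: is_matching_def)
  then show ?thesis by blast
qed

lemma opt_ge: "finite S \<Longrightarrow> M \<subseteq> S \<Longrightarrow> is_matching M \<Longrightarrow> card M \<le> opt S"
  unfolding opt_def by (rule Max_ge[OF opt_set_finite]) auto

lemma opt_obtain: "finite S \<Longrightarrow> \<exists>M\<subseteq>S. is_matching M \<and> card M = opt S"
proof -
  assume f: "finite S"
  have "opt S \<in> {card M | M. M \<subseteq> S \<and> is_matching M}"
    unfolding opt_def by (rule Max_in[OF opt_set_finite[OF f] opt_set_ne])
  then show ?thesis by auto
qed

lemma opt_mono: "finite S \<Longrightarrow> S' \<subseteq> S \<Longrightarrow> opt S' \<le> opt S"
proof -
  assume "finite S" "S' \<subseteq> S"
  then have "finite S'" by (rule finite_subset[rotated])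
  then obtain M where "M \<subseteq> S'" "is_matching M" "card M = opt S'" using opt_obtain by blast
  then show ?thesis using opt_ge[of S M] \<open>finite S\<close> \<open>S' \<subseteq> S\<close> by auto
qed

definition B :: "real \<Rightarrow> nat \<Rightarrow> nat \<Rightarrow> real" where
  "B p k r = (\<Sum>i<k. 1 - (1-p) ^ (r - i))"

lemma B_Suc: "B p (Suc k) r = (1 - (1-p) ^ r) + B p k (r - 1)"
proof -
  have e: "r - Suc i = r - 1 - i" for i by simp
  show ?thesis unfolding B_def by (subst sum.lessThan_Suc_shift) (simp only: e, simp)
qed

lemma B_mono:
  assumes "0 \<le> p" "p \<le> 1"
  shows "B p k (r - 1) \<le> B p k r"
  unfolding B_def
proof (rule sum_mono)
  fix i assume "i \<in> {..<k}"
  have "(1-p) ^ (r - i) \<le> (1-p) ^ (r - 1 - i)"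
    by (rule power_decreasing) (use assms in auto)
  then show "1 - (1-p) ^ (r - 1 - i) \<le> 1 - (1-p) ^ (r - i)" by simp
qed

lemma opt_insert:
  assumes fY: "finite Y" and Y: "Y \<subseteq> Lf \<times> (Rf - {r0})" and l: "l \<notin> Lf"
    and sub: "insert (l, r0) Y \<subseteq> T" and fT: "finite T"
  shows "opt Y + 1 \<le> opt T"
proof -
  obtain M where M: "M \<subseteq> Y" "is_matching M" "card M = opt Y" using opt_obtain[OF fY] by blast
  have fM: "finite M" using M fY finite_subset by blast
  have nm: "(l, r0) \<notin> M" using M Y l by auto
  have "is_matching (insert (l, r0) M)"
    unfolding is_matching_def
  proof (intro ballI impI)
    fix e f assume e: "e \<in> insert (l, r0) M" and f: "f \<in> insert (l, r0) M" and ne: "e \<noteq> f"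
    have lm: "\<And>g. g \<in> M \<Longrightarrow> fst g \<noteq> l \<and> snd g \<noteq> r0" using M(1) Y l by auto
    show "fst e \<noteq> fst f \<and> snd e \<noteq> snd f"
    proof (cases "e = (l, r0)")
      case True
      have "f \<in> M" using f ne True by auto
      with lm[OF this] True show ?thesis by auto
    next
      case False
      then have eM: "e \<in> M" using e by auto
      show ?thesis
      proof (cases "f = (l, r0)")
        case True then show ?thesis using lm[OF eM] by auto
      next
        case False then have "f \<in> M" using f by auto
        then show ?thesis using eM ne M(2) unfolding is_matching_def by blast
      qed
    qed
  qed
  moreover have "insert (l, r0) M \<subseteq> T" using M sub by auto
  ultimately have "card (insert (l, r0) M) \<le> opt T" using opt_ge[OF fT] by blast
  then show ?thesis using M fM nm by simp
qed

lemma greedy: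
  assumes "finite Lf" "0 \<le> p" "p \<le> 1"
  shows "finite Rf \<Longrightarrow> B p (card Lf) (card Rf) \<le> W p (Lf \<times> Rf) (\<lambda>S. real (opt S))"
  using assms(1)
proof (induction Lf arbitrary: Rf rule: finite_induct)
  case empty
  then show ?case by (simp add: B_def opt_def is_matching_def)
next
  case (insert l Lf)
  define q where "q = 1 - p"
  define r where "r = card Rf"
  define k where "k = card Lf"
  define a where "a = B p k r"
  define b where "b = 1 + B p k (r - 1)"
  have fA: "finite ({l} \<times> Rf)" "finite (Lf \<times> Rf)" using insert by auto
  have eq: "insert l Lf \<times> Rf = ({l} \<times> Rf) \<union> (Lf \<times> Rf)" by auto
  have W1: "W p (insert l Lf \<times> Rf) (\<lambda>S. real (opt S))
      = W p ({l} \<times> Rf) (\<lambda>X. W p (Lf \<times> Rf) (\<lambda>Y. real (opt (X \<union> Y))))"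
    unfolding eq using fA insert.hyps by (intro W_union) auto
  have inner: "(if X = {} then a else b) \<le> W p (Lf \<times> Rf) (\<lambda>Y. real (opt (X \<union> Y)))"
    if X: "X \<subseteq> {l} \<times> Rf" for X
  proof (cases "X = {}")
    case True
    then show ?thesis using insert.IH[OF insert.prems] by (simp add: a_def k_def r_def)
  next
    case False
    then obtain r0 where r0: "(l, r0) \<in> X" using X by auto
    then have r0R: "r0 \<in> Rf" using X by auto
    have fR': "finite (Rf - {r0})" using insert.prems by auto
    have cR': "card (Rf - {r0}) = r - 1" using r0R insert.prems by (simp add: r_def)
    have "b = 1 + B p (card Lf) (card (Rf - {r0}))" by (simp add: b_def k_def cR')
    also have "\<dots> \<le> 1 + W p (Lf \<times> (Rf - {r0})) (\<lambda>S. real (opt S))"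
      using insert.IH[OF fR'] by simp
    also have "\<dots> = W p (Lf \<times> Rf) (\<lambda>Y. 1 + real (opt (Y \<inter> (Lf \<times> (Rf - {r0})))))"
    proof -
      have "W p (Lf \<times> Rf) (\<lambda>Y. real (opt (Y \<inter> (Lf \<times> (Rf - {r0}))))) = W p (Lf \<times> (Rf - {r0})) (\<lambda>S. real (opt S))"
        by (rule W_restrict[where f="\<lambda>S. real (opt S)"]) (use fA in auto)
      then show ?thesis using fA by (simp add: W_add W_const)
    qed
    also have "\<dots> \<le> W p (Lf \<times> Rf) (\<lambda>Y. real (opt (X \<union> Y)))"
    proof (rule W_mono[OF assms(2,3)])
      fix Y assume Y: "Y \<subseteq> Lf \<times> Rf"
      have fY: "finite (Y \<inter> (Lf \<times> (Rf - {r0})))" using Y fA finite_subset by blast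
      have fT: "finite (X \<union> Y)" using X Y fA finite_subset by blast
      have "opt (Y \<inter> (Lf \<times> (Rf - {r0}))) + 1 \<le> opt (X \<union> Y)"
        by (rule opt_insert[OF fY _ insert.hyps(2) _ fT]) (use r0 in auto)
      then show "1 + real (opt (Y \<inter> (Lf \<times> (Rf - {r0})))) \<le> real (opt (X \<union> Y))" by linarith
    qed
    finally show ?thesis using False by simp
  qed
  have "W p ({l} \<times> Rf) (\<lambda>X. if X = {} then a else b)
      = W p ({l} \<times> Rf) (\<lambda>X. b + (a - b) * (if X = {} then 1 else 0))"
    by (intro arg_cong[where f="W p _"]) auto
  also have "\<dots> = b + (a - b) * q ^ r"
    using fA by (simp add: W_add W_const W_cmult W_emptyind q_def r_def card_cartesian_product)
  finally have Wab: "W p ({l} \<times> Rf) (\<lambda>X. if X = {} then a else b) = b + (a - b) * q ^ r" .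
  have "B p (card (insert l Lf)) (card Rf) = (1 - q ^ r) + B p k (r - 1)"
    using insert.hyps by (simp add: B_Suc k_def r_def q_def)
  also have "\<dots> \<le> b + (a - b) * q ^ r"
  proof -
    have "B p k (r - 1) \<le> a" unfolding a_def by (rule B_mono[OF assms(2,3)])
    moreover have "0 \<le> q ^ r" using assms by (simp add: q_def)
    ultimately have "q ^ r * B p k (r - 1) \<le> q ^ r * a" by (rule mult_left_mono)
    then show ?thesis by (simp add: b_def algebra_simps)
  qed
  also have "\<dots> \<le> W p (insert l Lf \<times> Rf) (\<lambda>S. real (opt S))"
    unfolding W1 Wab[symmetric] by (rule W_mono[OF assms(2,3) inner])
  finally show ?case .
qed

lemma B_lower:
  assumes "0 < p" "p \<le> 1"
  shows "real n - 1 / p \<le> B p n n"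
proof -
  define q where "q = 1 - p"
  have q: "0 \<le> q" "q < 1" "q \<noteq> 1" using assms by (auto simp: q_def)
  have "(\<Sum>i<n. q ^ (n - i)) = (\<Sum>i<n. q ^ Suc (n - Suc i))"
    by (intro sum.cong refl) (simp add: Suc_diff_Suc)
  also have "\<dots> = (\<Sum>i<n. q ^ Suc i)"
    by (rule sum.nat_diff_reindex)
  also have "\<dots> = q * (\<Sum>i<n. q ^ i)" by (simp add: sum_distrib_left)
  also have "\<dots> = q * ((1 - q ^ n) / (1 - q))" using q by (simp add: sum_gp_strict)
  also have "\<dots> \<le> 1 / p"
  proof -
    have "q * (1 - q ^ n) \<le> 1" using q by (simp add: mult_le_one power_le_one)
    then show ?thesis using assms by (simp add: q_def divide_right_mono)
  qed
  finally have s: "(\<Sum>i<n. q ^ (n - i)) \<le> 1 / p" .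
  have "B p n n = real n - (\<Sum>i<n. q ^ (n - i))"
    unfolding B_def q_def by (simp add: sum_subtractf)
  then show ?thesis using s by simp
qed

definition R :: "online_alg \<Rightarrow> edge list \<Rightarrow> real" where
  "R A ys = measure_pmf.expectation (run A [] ys) (\<lambda>h. real (card (accepted h)))"

lemma EA:
  assumes "finite S"
  shows "expected_alg A S = (\<Sum>ys\<in>permutations_of_set S. R A ys) / fact (card S)"
proof -
  have ne: "permutations_of_set S \<noteq> {}" using assms by simp
  have "expected_alg A S = measure_pmf.expectation (pmf_of_set (permutations_of_set S)) (R A)"
    unfolding expected_alg_def R_def
    by (rule E_bind) (use ne in \<open>auto simp: finite_run\<close>)
  also have "\<dots> = (\<Sum>ys\<in>permutations_of_set S. R A ys) / card (permutations_of_set S)"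
    by (rule integral_pmf_of_set) (use ne in auto)
  also have "\<dots> = (\<Sum>ys\<in>permutations_of_set S. R A ys) / fact (card S)"
    using assms by simp
  finally show ?thesis .
qed

lemma perm_decomp:
  assumes "finite G" "m \<le> card G"
  shows "permutations_of_set G = (\<Union>S\<in>{S. S \<subseteq> G \<and> card S = m}. \<Union>ys\<in>permutations_of_set S. (\<lambda>zs. ys @ zs) ` permutations_of_set (G - S))"
proof
  show "permutations_of_set G \<subseteq> (\<Union>S\<in>{S. S \<subseteq> G \<and> card S = m}. \<Union>ys\<in>permutations_of_set S. (\<lambda>zs. ys @ zs) ` permutations_of_set (G - S))"
  proof
    fix xs assume xs: "xs \<in> permutations_of_set G"
    have d: "distinct xs" "set xs = G" using permutations_of_setD[OF xs] by auto
    have len: "length xs = card G" using length_finite_permutations_of_set[OF xs] .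
    define S where "S = set (take m xs)"
    have "S \<subseteq> G" using d by (auto simp: S_def dest: in_set_takeD)
    moreover have "card S = m" using d len assms(2) by (simp add: S_def distinct_card)
    moreover have "take m xs \<in> permutations_of_set S" using d by (auto simp: S_def)
    moreover have "drop m xs \<in> permutations_of_set (G - S)"
    proof
      have "set (take m xs) \<inter> set (drop m xs) = {}" using d by (intro set_take_disj_set_drop_if_distinct) auto
      moreover have "set (take m xs) \<union> set (drop m xs) = G" using d by (metis append_take_drop_id set_append)
      ultimately show "set (drop m xs) = G - S" by (auto simp: S_def)
      show "distinct (drop m xs)" using d by simp
    qed
    moreover have "xs = take m xs @ drop m xs" by simp
    ultimately show "xs \<in> (\<Union>S\<in>{S. S \<subseteq> G \<and> card S = m}. \<Union>ys\<in>permutations_of_set S. (\<lambda>zs. ys @ zs) ` permutations_of_set (G - S))"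
      by blast
  qed
next
  show "(\<Union>S\<in>{S. S \<subseteq> G \<and> card S = m}. \<Union>ys\<in>permutations_of_set S. (\<lambda>zs. ys @ zs) ` permutations_of_set (G - S)) \<subseteq> permutations_of_set G"
  proof clarify
    fix S ys zs assume "S \<subseteq> G" "ys \<in> permutations_of_set S" "zs \<in> permutations_of_set (G - S)"
    then show "ys @ zs \<in> permutations_of_set G"
      by (auto simp: permutations_of_set_def)
  qed
qed

lemma sum_take:
  assumes "finite G" "m \<le> card G"
  shows "(\<Sum>xs\<in>permutations_of_set G. F (take m xs)) =
    fact (card G - m) * (\<Sum>S\<in>{S. S \<subseteq> G \<and> card S = m}. \<Sum>ys\<in>permutations_of_set S. F ys)"
proof -
  let ?SS = "{S. S \<subseteq> G \<and> card S = m}"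
  have finSS: "finite ?SS" using assms(1) by (rule finite_subset[rotated, OF finite_Pow_iff[THEN iffD2]]) auto
  have inj: "inj_on (\<lambda>zs. ys @ zs) X" for ys and X by (rule inj_onI) simp
  have lenys: "ys \<in> permutations_of_set S \<Longrightarrow> S \<in> ?SS \<Longrightarrow> length ys = m" for ys S
    using length_finite_permutations_of_set by force
  have "(\<Sum>xs\<in>permutations_of_set G. F (take m xs)) =
      (\<Sum>S\<in>?SS. \<Sum>ys\<in>permutations_of_set S. \<Sum>xs\<in>(\<lambda>zs. ys @ zs) ` permutations_of_set (G - S). F (take m xs))"
  proof -
    have f1: "\<forall>S\<in>?SS. finite (\<Union>ys\<in>permutations_of_set S. (\<lambda>zs. ys @ zs) ` permutations_of_set (G - S))" by simp
    have d1: "\<forall>S\<in>?SS. \<forall>T\<in>?SS. S \<noteq> T \<longrightarrow> (\<Union>ys\<in>permutations_of_set S. (\<lambda>zs. ys @ zs) ` permutations_of_set (G - S)) \<inter>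
       (\<Union>ys\<in>permutations_of_set T. (\<lambda>zs. ys @ zs) ` permutations_of_set (G - T)) = {}"
    proof (intro ballI impI)
      fix S T assume S: "S \<in> ?SS" and T: "T \<in> ?SS" and ST: "S \<noteq> T"
      show "(\<Union>ys\<in>permutations_of_set S. (\<lambda>zs. ys @ zs) ` permutations_of_set (G - S)) \<inter>
       (\<Union>ys\<in>permutations_of_set T. (\<lambda>zs. ys @ zs) ` permutations_of_set (G - T)) = {}"
      proof (rule ccontr)
        assume "\<not> ?thesis"
        then obtain ys zs ys' zs' where "ys \<in> permutations_of_set S" "ys' \<in> permutations_of_set T" "ys @ zs = ys' @ zs'"
          by blast
        moreover have "length ys = m" "length ys' = m" using calculation lenys S T by auto
        ultimately show False using ST by (auto simp: permutations_of_set_def)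
      qed
    qed
    have e2: "(\<Sum>S\<in>?SS. \<Sum>xs\<in>(\<Union>ys\<in>permutations_of_set S. (\<lambda>zs. ys @ zs) ` permutations_of_set (G - S)). F (take m xs)) =
      (\<Sum>S\<in>?SS. \<Sum>ys\<in>permutations_of_set S. \<Sum>xs\<in>(\<lambda>zs. ys @ zs) ` permutations_of_set (G - S). F (take m xs))"
    proof (rule sum.cong[OF refl])
      fix S assume S: "S \<in> ?SS"
      show "(\<Sum>xs\<in>(\<Union>ys\<in>permutations_of_set S. (\<lambda>zs. ys @ zs) ` permutations_of_set (G - S)). F (take m xs)) =
        (\<Sum>ys\<in>permutations_of_set S. \<Sum>xs\<in>(\<lambda>zs. ys @ zs) ` permutations_of_set (G - S). F (take m xs))"
      proof (rule sum.UNION_disjoint)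
        show "\<forall>ys\<in>permutations_of_set S. \<forall>ys'\<in>permutations_of_set S. ys \<noteq> ys' \<longrightarrow>
           (\<lambda>zs. ys @ zs) ` permutations_of_set (G - S) \<inter> (\<lambda>zs. ys' @ zs) ` permutations_of_set (G - S) = {}"
        proof (intro ballI impI)
          fix ys ys' assume y: "ys \<in> permutations_of_set S" "ys' \<in> permutations_of_set S" "ys \<noteq> ys'"
          have "length ys = m" "length ys' = m" using y lenys S by auto
          then show "(\<lambda>zs. ys @ zs) ` permutations_of_set (G - S) \<inter> (\<lambda>zs. ys' @ zs) ` permutations_of_set (G - S) = {}"
            using y(3) by auto
        qed
      qed auto
    qed
    show ?thesis unfolding perm_decomp[OF assms] by (subst sum.UNION_disjoint[OF finSS f1 d1]) (rule e2)
  qed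
  also have "\<dots> = (\<Sum>S\<in>?SS. \<Sum>ys\<in>permutations_of_set S. \<Sum>zs\<in>permutations_of_set (G - S). F ys)"
  proof (rule sum.cong[OF refl], rule sum.cong[OF refl])
    fix S ys assume S: "S \<in> ?SS" and ys: "ys \<in> permutations_of_set S"
    show "(\<Sum>xs\<in>(\<lambda>zs. ys @ zs) ` permutations_of_set (G - S). F (take m xs)) = (\<Sum>zs\<in>permutations_of_set (G - S). F ys)"
      using lenys[OF ys S] by (simp add: sum.reindex inj_on_def)
  qed
  also have "\<dots> = (\<Sum>S\<in>?SS. \<Sum>ys\<in>permutations_of_set S. fact (card G - m) * F ys)"
  proof (rule sum.cong[OF refl], rule sum.cong[OF refl])
    fix S ys assume S: "S \<in> ?SS"
    then have "card (G - S) = card G - m" using assms(1) by (auto simp: card_Diff_subset finite_subset)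
    then show "(\<Sum>zs\<in>permutations_of_set (G - S). F ys) = fact (card G - m) * F ys"
      using assms(1) by simp
  qed
  also have "\<dots> = fact (card G - m) * (\<Sum>S\<in>?SS. \<Sum>ys\<in>permutations_of_set S. F ys)"
    by (simp add: sum_distrib_left)
  finally show ?thesis .
qed

definition H :: "nat \<Rightarrow> edge set" where "H n = {..<n} \<times> {..<n}"
definition Good1 :: "nat \<Rightarrow> edge set" where "Good1 n = (\<lambda>i. (i, n+i)) ` {..<n}"
definition Good2 :: "nat \<Rightarrow> edge set" where "Good2 n = (\<lambda>i. (n+i, i)) ` {..<n}"
definition Good :: "nat \<Rightarrow> edge set" where "Good n = Good1 n \<union> Good2 n"
definition GG :: "nat \<Rightarrow> edge set" where "GG n = H n \<union> Good n"

lemma finite_GG: "finite (GG n)" "finite (Good n)" "finite (H n)"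
  by (auto simp: GG_def H_def Good_def Good1_def Good2_def)

lemma card_Good: "card (Good n) = 2 * n"
proof -
  have c1: "card (Good1 n) = n" unfolding Good1_def by (subst card_image) (auto simp: inj_on_def)
  have c2: "card (Good2 n) = n" unfolding Good2_def by (subst card_image) (auto simp: inj_on_def)
  have "Good1 n \<inter> Good2 n = {}" by (auto simp: Good1_def Good2_def)
  then have "card (Good n) = card (Good1 n) + card (Good2 n)" unfolding Good_def
    by (intro card_Un_disjoint) (auto simp: Good1_def Good2_def)
  then show ?thesis using c1 c2 by simp
qed

lemma matching_inj:
  assumes "is_matching M" shows "inj_on fst M" "inj_on snd M"
  using assms unfolding is_matching_def inj_on_def by blast+

lemma key_matching:
  assumes M: "M \<subseteq> GG n" "is_matching M"
  shows "card M + card (M \<inter> H n) \<le> 2 * n"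
proof -
  have fM: "finite M" using M(1) finite_GG finite_subset by blast
  have c1: "card (M \<inter> (H n \<union> Good1 n)) \<le> n"
  proof -
    have "card (M \<inter> (H n \<union> Good1 n)) = card (fst ` (M \<inter> (H n \<union> Good1 n)))"
      using matching_inj(1)[OF M(2)] by (simp add: card_image inj_on_Int)
    also have "\<dots> \<le> card {..<n}"
      by (intro card_mono) (auto simp: H_def Good1_def)
    finally show ?thesis by simp
  qed
  have c2: "card (M \<inter> (H n \<union> Good2 n)) \<le> n"
  proof -
    have "card (M \<inter> (H n \<union> Good2 n)) = card (snd ` (M \<inter> (H n \<union> Good2 n)))"
      using matching_inj(2)[OF M(2)] by (simp add: card_image inj_on_Int)
    also have "\<dots> \<le> card {..<n}"
      by (intro card_mono) (auto simp: H_def Good2_def)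
    finally show ?thesis by simp
  qed
  have e1: "card M = card (M \<inter> (H n \<union> Good1 n)) + card (M \<inter> Good2 n)"
  proof -
    have "M = (M \<inter> (H n \<union> Good1 n)) \<union> (M \<inter> Good2 n)" using M(1) by (auto simp: GG_def Good_def)
    moreover have "(M \<inter> (H n \<union> Good1 n)) \<inter> (M \<inter> Good2 n) = {}" by (auto simp: H_def Good1_def Good2_def)
    ultimately show ?thesis using fM by (metis card_Un_disjoint finite_Int)
  qed
  have e2: "card (M \<inter> (H n \<union> Good2 n)) = card (M \<inter> H n) + card (M \<inter> Good2 n)"
  proof -
    have "M \<inter> (H n \<union> Good2 n) = (M \<inter> H n) \<union> (M \<inter> Good2 n)" by auto
    moreover have "(M \<inter> H n) \<inter> (M \<inter> Good2 n) = {}" by (auto simp: H_def Good2_def)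
    ultimately show ?thesis using fM by (simp add: card_Un_disjoint)
  qed
  show ?thesis using c1 c2 e1 e2 by linarith
qed

lemma opt_GG: "2 * n \<le> opt (GG n)"
proof -
  have "is_matching (Good n)" unfolding is_matching_def Good_def Good1_def Good2_def by auto
  then have "card (Good n) \<le> opt (GG n)" using opt_ge[OF finite_GG(1)] by (auto simp: GG_def)
  then show ?thesis by (simp add: card_Good)
qed

lemma per_xs:
  assumes xs: "xs \<in> permutations_of_set (GG n)"
  shows "R A xs \<le> 2 * n - R A (take m xs) + card (set (take m xs) \<inter> Good n)"
proof -
  define g where "g = real (card (set (take m xs) \<inter> Good n))"
  have d: "set xs = GG n" "distinct xs" using permutations_of_setD[OF xs] by auto
  have mt: "is_matching (accepted [])" by (simp add: accepted_def is_matching_def)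
  have pt: "real (card (accepted h)) \<le> 2 * n - real (card (accepted h')) + g"
    if h': "h' \<in> set_pmf (run A [] (take m xs))" and h: "h \<in> set_pmf (run A h' (drop m xs))" for h h'
  proof -
    obtain zs1 where z1: "h' = zs1" "map fst zs1 = take m xs" using run_support[OF h'] by auto
    obtain zs2 where z2: "h = h' @ zs2" "map fst zs2 = drop m xs" using run_support[OF h] by auto
    have a1: "accepted h' \<subseteq> set (take m xs)" using accepted_sub[of zs1] z1 by simp
    have a2: "accepted zs2 \<subseteq> set (drop m xs)" using accepted_sub[of zs2] z2 by simp
    have ah: "accepted h = accepted h' \<union> accepted zs2" using z2 accepted_append by simp
    have sub: "accepted h \<subseteq> GG n" using a1 a2 ah d(1)
      by (metis Un_mono append_take_drop_id set_append)
    have m1: "is_matching (accepted h')" by (rule run_matching[OF mt h'])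
    have m2: "is_matching (accepted h)" by (rule run_matching[OF m1 h])
    have k: "card (accepted h) + card (accepted h \<inter> H n) \<le> 2 * n" by (rule key_matching[OF sub m2])
    have f: "finite (accepted h)" "finite (accepted h')" by (simp_all add: finite_accepted)
    have s1: "card (accepted h' \<inter> H n) \<le> card (accepted h \<inter> H n)"
      using f ah by (intro card_mono) auto
    have sub': "accepted h' \<subseteq> GG n" using sub ah by auto
    have s2: "card (accepted h') \<le> card (accepted h' \<inter> H n) + card (accepted h' \<inter> Good n)"
    proof -
      have "accepted h' = (accepted h' \<inter> H n) \<union> (accepted h' \<inter> Good n)" using sub' by (auto simp: GG_def)
      then have "card (accepted h') = card ((accepted h' \<inter> H n) \<union> (accepted h' \<inter> Good n))" by simp
      also have "\<dots> \<le> card (accepted h' \<inter> H n) + card (accepted h' \<inter> Good n)" by (rule card_Un_le)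
      finally show ?thesis .
    qed
    have s3: "card (accepted h' \<inter> Good n) \<le> card (set (take m xs) \<inter> Good n)"
      using a1 by (intro card_mono) auto
    show ?thesis using k s1 s2 s3 unfolding g_def by linarith
  qed
  have fin1: "finite (set_pmf (run A [] (take m xs)))" by (rule finite_run)
  have "R A xs = measure_pmf.expectation (run A [] (take m xs))
          (\<lambda>h'. measure_pmf.expectation (run A h' (drop m xs)) (\<lambda>h. real (card (accepted h))))"
    unfolding R_def
    by (subst append_take_drop_id[symmetric, of xs m], subst run_append, rule E_bind) (auto simp: finite_run)
  also have "\<dots> \<le> measure_pmf.expectation (run A [] (take m xs)) (\<lambda>h'. 2 * n - real (card (accepted h')) + g)"
  proof (rule E_mono[OF fin1])
    fix h' assume h': "h' \<in> set_pmf (run A [] (take m xs))"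
    have "measure_pmf.expectation (run A h' (drop m xs)) (\<lambda>h. real (card (accepted h)))
       \<le> measure_pmf.expectation (run A h' (drop m xs)) (\<lambda>h. 2 * n - real (card (accepted h')) + g)"
      by (rule E_mono[OF finite_run]) (rule pt[OF h'])
    then show "measure_pmf.expectation (run A h' (drop m xs)) (\<lambda>h. real (card (accepted h)))
       \<le> 2 * n - real (card (accepted h')) + g" by simp
  qed
  also have "\<dots> = 2 * n - R A (take m xs) + g"
    unfolding R_def using fin1
    by (simp add: integrable_measure_pmf_finite)
  finally show ?thesis unfolding g_def by simp
qed

lemma step_m:
  assumes m: "m \<le> card (GG n)"
  shows "expected_alg A (GG n) \<le> 2 * n - (fact m * fact (card (GG n) - m) / fact (card (GG n))) *
     (\<Sum>S\<in>{S. S \<subseteq> GG n \<and> card S = m}. expected_alg A S - real (card (S \<inter> Good n)))"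
proof -
  define G where "G = GG n"
  define N where "N = card G"
  define SS where "SS = {S. S \<subseteq> G \<and> card S = m}"
  have fG: "finite G" by (simp add: G_def finite_GG)
  have mN: "m \<le> N" using m by (simp add: N_def G_def)
  have fS: "S \<in> SS \<Longrightarrow> finite S" for S using fG by (auto simp: SS_def intro: finite_subset)
  have sumR: "(\<Sum>xs\<in>permutations_of_set G. R A xs) = fact N * expected_alg A G"
    using EA[OF fG, of A] by (simp add: N_def)
  have sumRt: "(\<Sum>xs\<in>permutations_of_set G. R A (take m xs)) = fact (N - m) * (\<Sum>S\<in>SS. fact m * expected_alg A S)"
  proof -
    have "(\<Sum>xs\<in>permutations_of_set G. R A (take m xs)) = fact (N - m) * (\<Sum>S\<in>SS. \<Sum>ys\<in>permutations_of_set S. R A ys)"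
      using sum_take[OF fG mN[unfolded N_def]] by (simp add: N_def SS_def)
    also have "\<dots> = fact (N - m) * (\<Sum>S\<in>SS. fact m * expected_alg A S)"
    proof -
      have "(\<Sum>ys\<in>permutations_of_set S. R A ys) = fact m * expected_alg A S" if "S \<in> SS" for S
        using EA[OF fS[OF that], of A] that by (simp add: SS_def)
      then show ?thesis by simp
    qed
    finally show ?thesis .
  qed
  have sumg: "(\<Sum>xs\<in>permutations_of_set G. real (card (set (take m xs) \<inter> Good n))) =
      fact (N - m) * (\<Sum>S\<in>SS. fact m * real (card (S \<inter> Good n)))"
  proof -
    have "(\<Sum>xs\<in>permutations_of_set G. real (card (set (take m xs) \<inter> Good n))) =
        fact (N - m) * (\<Sum>S\<in>SS. \<Sum>ys\<in>permutations_of_set S. real (card (set ys \<inter> Good n)))"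
      using sum_take[OF fG mN[unfolded N_def], of "\<lambda>ys. real (card (set ys \<inter> Good n))"]
      by (simp add: N_def SS_def)
    also have "\<dots> = fact (N - m) * (\<Sum>S\<in>SS. fact m * real (card (S \<inter> Good n)))"
    proof -
      have "(\<Sum>ys\<in>permutations_of_set S. real (card (set ys \<inter> Good n))) = fact m * real (card (S \<inter> Good n))"
        if "S \<in> SS" for S
      proof -
        have "(\<Sum>ys\<in>permutations_of_set S. real (card (set ys \<inter> Good n))) =
              (\<Sum>ys\<in>permutations_of_set S. real (card (S \<inter> Good n)))"
          by (intro sum.cong refl) (simp add: permutations_of_set_def)
        then show ?thesis using fS[OF that] that by (simp add: SS_def)
      qed
      then show ?thesis by simp
    qed
    finally show ?thesis .
  qed
  have "(\<Sum>xs\<in>permutations_of_set G. R A xs) \<le>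
        (\<Sum>xs\<in>permutations_of_set G. 2 * real n - R A (take m xs) + real (card (set (take m xs) \<inter> Good n)))"
    by (intro sum_mono per_xs) (simp add: G_def)
  also have "\<dots> = fact N * (2 * real n) - (\<Sum>xs\<in>permutations_of_set G. R A (take m xs))
      + (\<Sum>xs\<in>permutations_of_set G. real (card (set (take m xs) \<inter> Good n)))"
    using fG by (simp add: sum.distrib sum_subtractf N_def)
  finally have "fact N * expected_alg A G \<le> fact N * (2 * real n) - fact (N - m) * fact m *
      (\<Sum>S\<in>SS. expected_alg A S - real (card (S \<inter> Good n)))"
    unfolding sumR sumRt sumg by (simp add: sum_subtractf sum_distrib_left algebra_simps)
  then have "expected_alg A G \<le> (fact N * (2 * real n) - fact (N - m) * fact m *
      (\<Sum>S\<in>SS. expected_alg A S - real (card (S \<inter> Good n)))) / fact N"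
    by (simp add: field_simps)
  also have "\<dots> = 2 * n - (fact m * fact (N - m) / fact N) * (\<Sum>S\<in>SS. expected_alg A S - real (card (S \<inter> Good n)))"
    by (simp add: field_simps)
  finally show ?thesis by (simp add: G_def N_def SS_def)
qed

lemma mix:
  assumes p: "0 \<le> p" "p \<le> 1"
  shows "expected_alg A (GG n) \<le> 2 * n - W p (GG n) (\<lambda>S. expected_alg A S - real (card (S \<inter> Good n)))"
proof -
  define N where "N = card (GG n)"
  define D where "D m = (\<Sum>S\<in>{S. S \<subseteq> GG n \<and> card S = m}. expected_alg A S - real (card (S \<inter> Good n)))" for m
  define w where "w m = real (N choose m) * p ^ m * (1-p) ^ (N - m)" for m
  define a where "a m = fact m * fact (N - m) / (fact N :: real)" for m
  have wa: "w m * a m = p ^ m * (1-p) ^ (N - m)" if "m \<le> N" for m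
    using binomial_fact[OF that, where 'a=real] by (simp add: w_def a_def field_simps)
  have w1: "(\<Sum>m\<le>N. w m) = 1"
    using binomial_ring[of p "1-p" N] by (simp add: w_def)
  have w0: "0 \<le> w m" for m using p by (simp add: w_def)
  have "(\<Sum>m\<le>N. w m * expected_alg A (GG n)) \<le> (\<Sum>m\<le>N. w m * (2 * n - a m * D m))"
  proof (rule sum_mono)
    fix m assume "m \<in> {..N}"
    then have "expected_alg A (GG n) \<le> 2 * n - a m * D m"
      using step_m[of m n A] by (simp add: a_def D_def N_def)
    then show "w m * expected_alg A (GG n) \<le> w m * (2 * n - a m * D m)" by (rule mult_left_mono[OF _ w0])
  qed
  also have "\<dots> = 2 * n - (\<Sum>m\<le>N. p ^ m * (1-p) ^ (N - m) * D m)"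
  proof -
    have "(\<Sum>m\<le>N. w m * (2 * n - a m * D m)) = (\<Sum>m\<le>N. w m * (2 * n)) - (\<Sum>m\<le>N. (w m * a m) * D m)"
      by (simp add: sum_subtractf[symmetric] algebra_simps)
    also have "(\<Sum>m\<le>N. w m * (2 * n)) = (\<Sum>m\<le>N. w m) * (2 * n)"
      by (rule sum_distrib_right[symmetric])
    also have "(\<Sum>m\<le>N. (w m * a m) * D m) = (\<Sum>m\<le>N. p ^ m * (1-p) ^ (N - m) * D m)"
      by (intro sum.cong refl) (simp add: wa)
    finally show ?thesis using w1 by simp
  qed
  also have "\<dots> = 2 * n - W p (GG n) (\<lambda>S. expected_alg A S - real (card (S \<inter> Good n)))"
    by (simp add: W_bycard[OF finite_GG(1)] N_def D_def)
  finally have "(\<Sum>m\<le>N. w m * expected_alg A (GG n)) \<le> 2 * n - W p (GG n) (\<lambda>S. expected_alg A S - real (card (S \<inter> Good n)))" .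
  moreover have "(\<Sum>m\<le>N. w m * expected_alg A (GG n)) = expected_alg A (GG n)"
    by (simp add: sum_distrib_right[symmetric] w1)
  ultimately show ?thesis by simp
qed

lemma W_good:
  "W p (GG n) (\<lambda>S. real (card (S \<inter> Good n))) = 2 * n * p"
proof -
  have "W p (GG n) (\<lambda>S. real (card (S \<inter> Good n))) = W p (GG n) (\<lambda>S. \<Sum>e\<in>Good n. if e \<in> S then 1 else 0)"
  proof (rule arg_cong[where f="W p (GG n)"], rule ext)
    fix S
    have "(\<Sum>e\<in>Good n. (if e \<in> S then 1 else 0 :: real)) = real (card (Good n \<inter> S))"
      using finite_GG(2) by (simp add: sum.If_cases Int_def)
    then show "real (card (S \<inter> Good n)) = (\<Sum>e\<in>Good n. if e \<in> S then 1 else 0)" by (simp add: Int_commute)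
  qed
  also have "\<dots> = (\<Sum>e\<in>Good n. W p (GG n) (\<lambda>S. if e \<in> S then 1 else 0))" by (rule W_sum)
  also have "\<dots> = (\<Sum>e\<in>Good n. p)"
    by (intro sum.cong refl W_mem finite_GG) (auto simp: GG_def)
  also have "\<dots> = 2 * n * p" by (simp add: card_Good)
  finally show ?thesis by simp
qed

lemma main_bound:
  assumes p: "0 < p" "p \<le> 1" and c: "0 \<le> c"
    and hyp: "\<And>S. S \<subseteq> GG n \<Longrightarrow> c * real (opt S) \<le> expected_alg A S"
  shows "expected_alg A (GG n) \<le> 2 * n - c * (n - 1 / p) + 2 * n * p"
proof -
  have p0: "0 \<le> p" using p by simp
  have "c * (n - 1 / p) \<le> c * B p n n" using B_lower[OF p] c by (intro mult_left_mono) auto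
  also have "B p n n \<le> W p (H n) (\<lambda>S. real (opt S))"
    using greedy[of "{..<n}" p "{..<n}"] p by (simp add: H_def)
  also have "\<dots> = W p (GG n) (\<lambda>S. real (opt (S \<inter> H n)))"
    by (rule W_restrict[symmetric]) (auto simp: finite_GG GG_def)
  also have "\<dots> \<le> W p (GG n) (\<lambda>S. real (opt S))"
  proof (rule W_mono[OF p0 p(2)])
    fix S assume "S \<subseteq> GG n"
    then have "finite S" using finite_GG(1) finite_subset by blast
    then show "real (opt (S \<inter> H n)) \<le> real (opt S)" by (simp add: opt_mono)
  qed
  finally have "c * (n - 1 / p) \<le> c * W p (GG n) (\<lambda>S. real (opt S))" using c by (simp add: mult_left_mono)
  also have "\<dots> = W p (GG n) (\<lambda>S. c * real (opt S))" by (simp add: W_cmult)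
  also have "\<dots> \<le> W p (GG n) (expected_alg A)" by (rule W_mono[OF p0 p(2) hyp])
  finally have 1: "c * (n - 1 / p) \<le> W p (GG n) (expected_alg A)" .
  have "expected_alg A (GG n) \<le> 2 * n - W p (GG n) (\<lambda>S. expected_alg A S - real (card (S \<inter> Good n)))"
    using mix[OF p0 p(2), of A n] by simp
  also have "\<dots> = 2 * n - W p (GG n) (expected_alg A) + 2 * n * p"
    by (simp add: W_diff W_good)
  finally show ?thesis using 1 by linarith
qed

lemma EA_nonneg: "0 \<le> expected_alg A S"
  unfolding expected_alg_def by (rule integral_nonneg_AE) simp

lemma opt_empty: "opt {} = 0"
proof -
  have "{card M | M. M \<subseteq> {} \<and> is_matching M} = {0}"
    by (auto simp: is_matching_def)
  then show ?thesis by (simp add: opt_def)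
qed

lemma opt_pos: "finite S \<Longrightarrow> S \<noteq> {} \<Longrightarrow> 1 \<le> opt S"
proof -
  assume "finite S" "S \<noteq> {}"
  then obtain e where "e \<in> S" by auto
  have "is_matching {e}" by (simp add: is_matching_def)
  then have "card {e} \<le> opt S" using opt_ge[OF \<open>finite S\<close>, of "{e}"] \<open>e \<in> S\<close> by auto
  then show ?thesis by simp
qed

lemma arith_final:
  fixes c e p x \<epsilon> :: real
  assumes e: "0 < e" "e \<le> 1" "e \<le> \<epsilon>" and p: "p = e / 2" and x: "2 \<le> e * x"
    and h: "c * (3 * x - 1) \<le> x * (2 + e)"
  shows "c \<le> 2/3 + \<epsilon>"
proof (rule ccontr)
  assume "\<not> ?thesis"
  then have c: "c > 2/3 + e" using e by linarith
  have xa: "2 / e \<le> x" using x e by (simp add: divide_le_eq mult.commute)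
  have xb: "2 \<le> 2 / e" using e by (simp add: le_divide_eq)
  have x0: "x \<ge> 2" using xa xb by linarith
  have "3 * x - 1 > 0" using x0 by linarith
  then have "(2/3 + e) * (3 * x - 1) < c * (3 * x - 1)" using c by (intro mult_strict_right_mono) auto
  with h have "(2/3 + e) * (3 * x - 1) < x * (2 + e)" by linarith
  then have "2 * (e * x) < 2/3 + e" by (simp add: algebra_simps divide_simps)
  then show False using x e by linarith
qed

theorem theorem7:
  fixes \<epsilon> :: real and A :: online_alg
  assumes "\<epsilon> > 0"
    and "\<And>h e. 0 \<le> A h e \<and> A h e \<le> 1"
  shows "competitive_ratio A \<le> 2/3 + \<epsilon>"
proof -
  define c where "c = competitive_ratio A"
  show ?thesis
  proof (cases "c < 0")
    case True then show ?thesis using assms(1) unfolding c_def by linarith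
  next
    case False
    then have c0: "0 \<le> c" by simp
    define e where "e = min \<epsilon> 1"
    define p where "p = e / 2"
    define n where "n = nat \<lceil>4 / e^2\<rceil> + 1"
    have e: "0 < e" "e \<le> 1" "e \<le> \<epsilon>" using assms(1) by (auto simp: e_def)
    have p: "0 < p" "p \<le> 1" using e by (auto simp: p_def)
    have n0: "0 < n" by (simp add: n_def)
    have lower: "c \<le> expected_alg A S / real (opt S)" if "finite S" "S \<noteq> {}" for S
      unfolding c_def competitive_ratio_def
    proof (rule cINF_lower)
      show "bdd_below ((\<lambda>E. expected_alg A E / real (opt E)) ` {E. finite E \<and> E \<noteq> {}})"
        by (rule bdd_belowI2[where m=0]) (simp add: EA_nonneg)
      show "S \<in> {E. finite E \<and> E \<noteq> {}}" using that by simp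
    qed
    have hyp: "c * real (opt S) \<le> expected_alg A S" if "S \<subseteq> GG n" for S
    proof (cases "S = {}")
      case True then show ?thesis by (simp add: opt_empty EA_nonneg)
    next
      case False
      have fS: "finite S" using that finite_GG(1) finite_subset by blast
      have "1 \<le> opt S" by (rule opt_pos[OF fS False])
      then have "0 < real (opt S)" by simp
      then show ?thesis using lower[OF fS False] by (simp add: pos_le_divide_eq)
    qed
    have mb: "expected_alg A (GG n) \<le> 2 * n - c * (n - 1 / p) + 2 * n * p"
      using main_bound[OF p c0 hyp] by simp
    have "c * real (opt (GG n)) \<le> expected_alg A (GG n)" by (rule hyp) simp
    moreover have "c * (2 * n) \<le> c * real (opt (GG n))"
      using opt_GG[of n] c0 by (intro mult_left_mono) auto
    ultimately have h1: "c * (2 * n) \<le> 2 * n - c * (n - 1 / p) + 2 * n * p" using mb by linarith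
    define x where "x = real n * p"
    have "p * (c * (2 * n)) \<le> p * (2 * n - c * (n - 1 / p) + 2 * n * p)"
      using h1 p by (intro mult_left_mono) auto
    then have h2: "c * (3 * x - 1) \<le> x * (2 + e)"
      using p unfolding x_def p_def by (simp add: algebra_simps)
    have "4 / e^2 \<le> real n" unfolding n_def by linarith
    then have "4 \<le> real n * e^2" using e by (simp add: divide_le_eq)
    then have x2: "2 \<le> e * x" unfolding x_def p_def by (simp add: power2_eq_square algebra_simps)
    show ?thesis unfolding c_def[symmetric] by (rule arith_final[OF e p_def x2 h2])
  qed
qed

end
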